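(* Let $O_n^{(m)}=\sum_{k=1}^n (2k-1)^{-m}$ and $G=\beta(2)$ (Catalan's constant). Then: (i) $\displaystyle\sum_{n=1}^{\infty}\frac{4^n}{n^2\binom{2n}{n}}=8\beta(1)^2=\frac{\pi^2}{2}$; (ii) $\displaystyle\sum_{n=1}^{\infty}\frac{4^n}{n^2\binom{2n}{n}}O_n^{(2)}=16\beta(1)\beta(3)-8\beta(2)^2=\frac{\pi^4}{8}-8G^2$; (iii) $\displaystyle\sum_{n=1}^{\infty}\frac{4^n}{n^2\binom{2n}{n}}\,\frac{(O_n^{(2)})^2+O_n^{(4)}}{2}=16\beta(1)\beta(5)-16\beta(2)\beta(4)+8\beta(3)^2=\frac{\pi^6}{48}-16G\beta(4)$; (iv) $\displaystyle\sum_{n=1}^{\infty}\frac{4^n}{n^2\binom{2n}{n}}\,\frac{(O_n^{(2)})^3+3O_n^{(2)}O_n^{(4)}+2O_n^{(6)}}{6}=16\beta(1)\beta(7)-16\beta(2)\beta(6)+16\beta(3)\beta(5)-8\beta(4)^2=\frac{17\pi^8}{5760}-16G\beta(6)-8\beta(4)^2$.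
   Context: The Dirichlet beta function is $\beta(m)=\sum_{k=1}^\infty \frac{(-1)^{k-1}}{(2k-1)^m}$ for integers $m\ge1$; known values: $\beta(1)=\pi/4$, $\beta(3)=\pi^3/32$, $\beta(5)=5\pi^5/1536$, $\beta(7)=61\pi^7/184320$. The expressions $1$, $O_n^{(2)}$, $\frac{(O_n^{(2)})^2+O_n^{(4)}}{2}$, $\frac{(O_n^{(2)})^3+3O_n^{(2)}O_n^{(4)}+2O_n^{(6)}}{6}$ equal the multiple $t$-harmonic star sums $t_n^{\star}(\{2\}_j)=\sum_{n\ge k_1\ge\dots\ge k_j\ge 1}\prod_{i=1}^j (2k_i-1)^{-2}$ for $j=0,1,2,3$ respectively. *)

theory Defs
  imports "HOL-Analysis.Analysis"
begin

definition dirichlet_beta :: "nat \<Rightarrow> real" where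
  "dirichlet_beta m = (\<Sum>k. (-1) ^ k / (2 * real k + 1) ^ m)"

definition odd_harm :: "nat \<Rightarrow> nat \<Rightarrow> real" where
  "odd_harm m n = (\<Sum>k=1..n. 1 / (2 * real k - 1) ^ m)"

definition cbw :: "nat \<Rightarrow> real" where
  "cbw n = 4 ^ n / (real n ^ 2 * real ((2 * n) choose n))"

end

theory Submission
  imports Defs
begin

declare binomial_Suc_Suc [simp del]

lemma Gamma_refl_real:
  fixes x :: real assumes "0 < x" "x < 1"
  shows "Gamma x * Gamma (1 - x) = pi / sin (pi * x)"
proof -
  have e: "Gamma (1 - complex_of_real x) = of_real (Gamma (1-x))"
    by (metis Gamma_complex_of_real of_real_1 of_real_diff)
  have "complex_of_real (Gamma x * Gamma (1 - x)) = Gamma (complex_of_real x) * Gamma (1 - complex_of_real x)"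
    by (simp add: Gamma_complex_of_real e)
  also have "\<dots> = of_real pi / sin (of_real pi * of_real x)" by (rule Gamma_reflection_complex)
  also have "\<dots> = complex_of_real (pi / sin (pi * x))"
    by (simp flip: sin_of_real)
  finally show ?thesis by (simp only: of_real_eq_iff)
qed

definition cotf :: "real \<Rightarrow> real" where "cotf x = cos (pi * x) / sin (pi * x)"

lemma sin_pos01: "0 < x \<Longrightarrow> x < 1 \<Longrightarrow> sin (pi * x) > 0"
  by (rule sin_gt_zero) auto

lemma lnG_refl:
  fixes x :: real assumes "0 < x" "x < 1"
  shows "ln_Gamma x + ln_Gamma (1 - x) = ln pi - ln (sin (pi * x))"
proof -
  have "ln_Gamma x + ln_Gamma (1 - x) = ln (Gamma x * Gamma (1 - x))"
  proof -
    have g: "Gamma x > 0" "Gamma (1 - x) > 0" using assms by auto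
    have "ln_Gamma x = ln (Gamma x)" "ln_Gamma (1 - x) = ln (Gamma (1 - x))"
      using assms by (auto simp: ln_Gamma_real_pos)
    thus ?thesis using g by (simp add: ln_mult)
  qed
  also have "\<dots> = ln (pi / sin (pi * x))" using Gamma_refl_real[OF assms] by simp
  also have "\<dots> = ln pi - ln (sin (pi * x))" using sin_pos01[OF assms] by (simp add: ln_div)
  finally show ?thesis .
qed

lemma Digamma_refl:
  fixes x :: real assumes "0 < x" "x < 1"
  shows "Digamma (1 - x) - Digamma x = pi * cotf x"
proof -
  have d1: "((\<lambda>x. ln_Gamma x + ln_Gamma (1 - x)) has_real_derivative (Digamma x - Digamma (1 - x))) (at x)"
    using assms by (auto intro!: derivative_eq_intros)
  have "((\<lambda>x. ln pi - ln (sin (pi * x))) has_real_derivative (- (pi * cos (pi * x)) / sin (pi * x))) (at x)"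
    using sin_pos01[OF assms] by (auto intro!: derivative_eq_intros simp: field_simps)
  moreover have "eventually (\<lambda>y. ln_Gamma y + ln_Gamma (1 - y) = ln pi - ln (sin (pi * y))) (nhds x)"
  proof -
    have "eventually (\<lambda>y. y \<in> {0<..<1}) (nhds x)" using assms by (intro eventually_nhds_in_open) auto
    thus ?thesis by eventually_elim (auto intro: lnG_refl)
  qed
  ultimately have d2: "((\<lambda>x. ln_Gamma x + ln_Gamma (1 - x)) has_real_derivative (- (pi * cos (pi * x)) / sin (pi * x))) (at x)"
    by (subst DERIV_cong_ev[OF refl _ refl]) auto
  from DERIV_unique[OF d1 d2] show ?thesis by (simp add: cotf_def)
qed

lemma cotf_deriv:
  fixes x :: real assumes "0 < x" "x < 1"
  shows "(cotf has_real_derivative (- pi * (1 + cotf x ^ 2))) (at x)"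
proof -
  have s: "sin (pi * x) \<noteq> 0" using sin_pos01[OF assms] by simp
  have "((\<lambda>x. cos (pi * x) / sin (pi * x)) has_real_derivative
     ((- sin (pi * x) * pi) * sin (pi * x) - cos (pi * x) * (cos (pi * x) * pi)) / (sin (pi * x))^2) (at x)"
    using s by (auto intro!: derivative_eq_intros simp: power2_eq_square)
  also have "((- sin (pi * x) * pi) * sin (pi * x) - cos (pi * x) * (cos (pi * x) * pi)) / (sin (pi * x))^2
     = - pi * (1 + cotf x ^ 2)"
  proof -
    have a: "((- sin (pi * x) * pi) * sin (pi * x) - cos (pi * x) * (cos (pi * x) * pi)) = - pi"
    proof -
      have a0: "pi * (cos (pi*x) * cos (pi*x) + sin (pi*x) * sin (pi*x)) = pi"
        by (simp only: sin_cos_squared_add3 mult_1_right)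
      have "((- sin (pi * x) * pi) * sin (pi * x) - cos (pi * x) * (cos (pi * x) * pi)) = - (pi * (cos (pi*x) * cos (pi*x) + sin (pi*x) * sin (pi*x)))"
        by (simp add: algebra_simps del: sin_cos_squared_add3 sin_cos_squared_add sin_cos_squared_add2)
      also have "\<dots> = - pi" by (simp only: a0)
      finally show ?thesis .
    qed
    have b: "1 + cotf x ^ 2 = 1 / (sin (pi * x))^2"
      using s sin_cos_squared_add[of "pi * x"] by (simp add: cotf_def field_simps)
    show ?thesis unfolding a b by simp
  qed
  finally show ?thesis by (simp add: cotf_def [abs_def])
qed

definition PF :: "nat \<Rightarrow> real \<Rightarrow> real" where
  "PF n x = (-1) ^ n * Polygamma n (1 - x) - Polygamma n x"

lemma PF_step:
  fixes x :: real
  assumes eq: "\<And>y. 0 < y \<Longrightarrow> y < 1 \<Longrightarrow> PF n y = g y"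
    and dg: "(g has_real_derivative g') (at x)" and x: "0 < x" "x < 1"
  shows "PF (Suc n) x = g'"
proof -
  have nx: "x \<notin> \<int>\<^sub>\<le>\<^sub>0" "1 - x \<notin> \<int>\<^sub>\<le>\<^sub>0" using x by (auto elim!: nonpos_Ints_cases)
  have d1: "(PF n has_real_derivative PF (Suc n) x) (at x)"
    unfolding PF_def[abs_def] using nx
    by (auto intro!: derivative_eq_intros simp: PF_def)
  have "eventually (\<lambda>y. PF n y = g y) (nhds x)"
  proof -
    have "eventually (\<lambda>y. y \<in> {0<..<1}) (nhds x)" using x by (intro eventually_nhds_in_open) auto
    thus ?thesis by eventually_elim (auto intro: eq)
  qed
  hence d2: "(PF n has_real_derivative g') (at x)"
    by (subst DERIV_cong_ev[OF refl _ refl]) (use dg in auto)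
  from DERIV_unique[OF d1 d2] show ?thesis .
qed


lemma cotf_deriv' [derivative_intros]:
  "0 < x \<Longrightarrow> x < 1 \<Longrightarrow> D = - pi * (1 + cotf x ^ 2) \<Longrightarrow> (cotf has_real_derivative D) (at x within S)"
  using cotf_deriv by (blast intro: has_field_derivative_at_within)

lemma PF0: "0 < x \<Longrightarrow> x < 1 \<Longrightarrow> PF 0 x = pi * cotf x"
  using Digamma_refl by (simp add: PF_def)

lemma PF1: assumes "0 < x" "x < 1" shows "PF 1 x = - (pi^2 * (1 + cotf x ^ 2))"
proof -
  have "((\<lambda>y. pi * cotf y) has_real_derivative (- (pi^2 * (1 + cotf x ^ 2)))) (at x)"
    using assms by (auto intro!: derivative_eq_intros simp: power2_eq_square)
  from PF_step[OF PF0 this assms] show ?thesis by simp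
qed

lemma PF2: assumes "0 < x" "x < 1" shows "PF 2 x = pi^3 * (2 * cotf x + 2 * cotf x ^ 3)"
proof -
  have "((\<lambda>y. - (pi^2 * (1 + cotf y ^ 2))) has_real_derivative (pi^3 * (2 * cotf x + 2 * cotf x ^ 3))) (at x)"
    using assms by (auto intro!: derivative_eq_intros) algebra
  from PF_step[OF PF1 this assms] show ?thesis by (simp add: numeral_eq_Suc)
qed

lemma PF3: assumes "0 < x" "x < 1" shows "PF 3 x = - (pi^4 * (2 + 8 * cotf x ^ 2 + 6 * cotf x ^ 4))"
proof -
  have "((\<lambda>y. pi^3 * (2 * cotf y + 2 * cotf y ^ 3)) has_real_derivative (- (pi^4 * (2 + 8 * cotf x ^ 2 + 6 * cotf x ^ 4)))) (at x)"
    using assms by (auto intro!: derivative_eq_intros) algebra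
  from PF_step[OF PF2 this assms] show ?thesis by (simp add: numeral_eq_Suc)
qed

lemma PF4: assumes "0 < x" "x < 1" shows "PF 4 x = pi^5 * (16 * cotf x + 40 * cotf x ^ 3 + 24 * cotf x ^ 5)"
proof -
  have "((\<lambda>y. - (pi^4 * (2 + 8 * cotf y ^ 2 + 6 * cotf y ^ 4))) has_real_derivative (pi^5 * (16 * cotf x + 40 * cotf x ^ 3 + 24 * cotf x ^ 5))) (at x)"
    using assms by (auto intro!: derivative_eq_intros) algebra
  from PF_step[OF PF3 this assms] show ?thesis by (simp add: numeral_eq_Suc)
qed

lemma PF5: assumes "0 < x" "x < 1" shows "PF 5 x = - (pi^6 * (16 + 136 * cotf x ^ 2 + 240 * cotf x ^ 4 + 120 * cotf x ^ 6))"
proof -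
  have "((\<lambda>y. pi^5 * (16 * cotf y + 40 * cotf y ^ 3 + 24 * cotf y ^ 5)) has_real_derivative (- (pi^6 * (16 + 136 * cotf x ^ 2 + 240 * cotf x ^ 4 + 120 * cotf x ^ 6)))) (at x)"
    using assms by (auto intro!: derivative_eq_intros) algebra
  from PF_step[OF PF4 this assms] show ?thesis by (simp add: numeral_eq_Suc)
qed

lemma PF6: assumes "0 < x" "x < 1" shows "PF 6 x = pi^7 * (272 * cotf x + 1232 * cotf x ^ 3 + 1680 * cotf x ^ 5 + 720 * cotf x ^ 7)"
proof -
  have "((\<lambda>y. - (pi^6 * (16 + 136 * cotf y ^ 2 + 240 * cotf y ^ 4 + 120 * cotf y ^ 6))) has_real_derivative (pi^7 * (272 * cotf x + 1232 * cotf x ^ 3 + 1680 * cotf x ^ 5 + 720 * cotf x ^ 7))) (at x)"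
    using assms by (auto intro!: derivative_eq_intros) algebra
  from PF_step[OF PF5 this assms] show ?thesis by (simp add: numeral_eq_Suc)
qed


lemma beta_summable: assumes "m \<ge> 1"
  shows "summable (\<lambda>k. (-1) ^ k / (2 * real k + 1) ^ m)"
proof -
  have "summable (\<lambda>k. (-1) ^ k * (1 / (2 * real k + 1) ^ m))"
  proof (rule summable_Leibniz'(1))
    show "(\<lambda>k. 1 / (2 * real k + 1) ^ m) \<longlonglongrightarrow> 0"
    proof (rule Lim_null_comparison[OF _ lim_inverse_n'])
      show "\<forall>\<^sub>F k in sequentially. norm (1 / (2 * real k + 1) ^ m) \<le> 1 / real k"
      proof (rule eventually_mono[OF eventually_gt_at_top[of 0]])
        fix k :: nat assume k: "k > 0"
        have "real k \<le> 2 * real k + 1" by simp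
        also have "\<dots> \<le> (2 * real k + 1) ^ m" using assms by (intro self_le_power) auto
        finally show "norm (1 / (2 * real k + 1) ^ m) \<le> 1 / real k"
          using k by (auto simp: field_simps)
      qed
    qed
    show "\<And>n. 0 \<le> 1 / (2 * real n + 1) ^ m" by simp
    show "\<And>n. 1 / (2 * real (Suc n) + 1) ^ m \<le> 1 / (2 * real n + 1) ^ m"
      by (intro divide_left_mono power_mono) auto
  qed
  thus ?thesis by simp
qed

lemma beta_sums: "m \<ge> 1 \<Longrightarrow> (\<lambda>k. (-1) ^ k / (2 * real k + 1) ^ m) sums dirichlet_beta m"
  using beta_summable unfolding dirichlet_beta_def by (simp add: summable_sums)

lemma beta_grouped: assumes "m \<ge> 1"
  shows "(\<lambda>k. 1 / (4 * real k + 1) ^ m - 1 / (4 * real k + 3) ^ m) sums dirichlet_beta m"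
proof -
  have "(\<lambda>n. sum (\<lambda>k. (-1) ^ k / (2 * real k + 1) ^ m) {n * 2 ..< n * 2 + 2}) sums dirichlet_beta m"
    by (rule sums_group[OF beta_sums[OF assms]]) simp
  also have "(\<lambda>n. sum (\<lambda>k. (-1) ^ k / (2 * real k + 1) ^ m) {n * 2 ..< n * 2 + 2})
     = (\<lambda>k. 1 / (4 * real k + 1) ^ m - 1 / (4 * real k + 3) ^ m)"
  proof
    fix n :: nat
    have "{n * 2 ..< n * 2 + 2} = {2*n, Suc (2*n)}" by auto
    thus "sum (\<lambda>k. (-1) ^ k / (2 * real k + 1) ^ m) {n * 2 ..< n * 2 + 2} = 1 / (4 * real n + 1) ^ m - 1 / (4 * real n + 3) ^ m"
      by (simp add: algebra_simps)
  qed
  finally show ?thesis .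
qed

lemma beta_PF: assumes "even n" "n \<ge> 2"
  shows "dirichlet_beta (Suc n) = PF n (1/4) / (fact n * 4 ^ Suc n)"
proof -
  have n0: "n > 0" using assms by simp
  have s1: "(\<lambda>k. inverse ((1/4 + of_nat k) ^ Suc n)) sums ((-1) ^ Suc n * Polygamma n (1/4 :: real) / fact n)"
    by (rule Polygamma_LIMSEQ) (use n0 in auto)
  have s2: "(\<lambda>k. inverse ((3/4 + of_nat k) ^ Suc n)) sums ((-1) ^ Suc n * Polygamma n (3/4 :: real) / fact n)"
    by (rule Polygamma_LIMSEQ) (use n0 in auto)
  have sg: "(-1::real) ^ Suc n = -1" using assms by simp
  have "(\<lambda>k. (inverse ((1/4 + of_nat k) ^ Suc n) - inverse ((3/4 + of_nat k) ^ Suc n)) / 4 ^ Suc n)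
     sums (((-1) ^ Suc n * Polygamma n (1/4 :: real) / fact n - (-1) ^ Suc n * Polygamma n (3/4 :: real) / fact n) / 4 ^ Suc n)"
    by (intro sums_divide sums_diff s1 s2)
  also have "(\<lambda>k. (inverse ((1/4 + of_nat k) ^ Suc n) - inverse ((3/4 + of_nat k) ^ Suc n)) / 4 ^ Suc n)
      = (\<lambda>k. 1 / (4 * real k + 1) ^ Suc n - 1 / (4 * real k + 3) ^ Suc n)"
  proof
    fix k :: nat
    have a: "(1/4 + real k) = (4 * real k + 1) / 4" "(3/4 + real k) = (4 * real k + 3) / 4" by simp_all
    show "(inverse ((1/4 + of_nat k) ^ Suc n) - inverse ((3/4 + of_nat k) ^ Suc n)) / 4 ^ Suc n = 1 / (4 * real k + 1) ^ Suc n - 1 / (4 * real k + 3) ^ Suc n"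
    proof -
      have q: "inverse ((y / 4) ^ Suc n) / 4 ^ Suc n = 1 / y ^ Suc n" if "y > 0" for y :: real
        using that by (simp add: power_divide)
      have q1: "inverse ((1/4 + real k) ^ Suc n) / 4 ^ Suc n = 1 / (4 * real k + 1) ^ Suc n"
        using q[of "4*real k+1"] unfolding a by simp
      have q2: "inverse ((3/4 + real k) ^ Suc n) / 4 ^ Suc n = 1 / (4 * real k + 3) ^ Suc n"
        using q[of "4*real k+3"] unfolding a by simp
      show ?thesis by (simp only: diff_divide_distrib q1 q2)
    qed
  qed
  also have "((-1) ^ Suc n * Polygamma n (1/4 :: real) / fact n - (-1) ^ Suc n * Polygamma n (3/4 :: real) / fact n) / 4 ^ Suc n
     = PF n (1/4) / (fact n * 4 ^ Suc n)"
    using assms by (simp add: PF_def sg field_simps)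
  finally have "(\<lambda>k. 1 / (4 * real k + 1) ^ Suc n - 1 / (4 * real k + 3) ^ Suc n) sums (PF n (1/4) / (fact n * 4 ^ Suc n))" .
  from sums_unique2[OF beta_grouped[of "Suc n"] this] show ?thesis by simp
qed

lemma cotf_quarter: "cotf (1/4) = 1"
  by (simp add: cotf_def cos_45 sin_45)

lemma beta1: "dirichlet_beta 1 = pi / 4"
proof -
  have "(\<lambda>k. (-1) ^ k / (2 * real k + 1) ^ 1) = (\<lambda>k. (-1)^k * 1 / real (k * 2 + 1))"
    by (auto simp: algebra_simps)
  thus ?thesis using pi_series unfolding dirichlet_beta_def by simp
qed

lemma beta3: "dirichlet_beta 3 = pi ^ 3 / 32"
  using beta_PF[of 2] PF2[of "1/4"] by (simp add: cotf_quarter numeral_eq_Suc fact_Suc)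

lemma beta5: "dirichlet_beta 5 = 5 * pi ^ 5 / 1536"
proof -
  have "dirichlet_beta 5 = PF 4 (1/4) / (fact 4 * 4 ^ 5)" using beta_PF[of 4] by simp
  thus ?thesis using PF4[of "1/4"] by (simp add: cotf_quarter fact_numeral)
qed

lemma beta7: "dirichlet_beta 7 = 61 * pi ^ 7 / 184320"
proof -
  have "dirichlet_beta 7 = PF 6 (1/4) / (fact 6 * 4 ^ 7)" using beta_PF[of 6] by simp
  thus ?thesis using PF6[of "1/4"] by (simp add: cotf_quarter fact_numeral)
qed


lemma bin_up: "real (Suc n choose Suc k) * (real k + 1) = (real n + 1) * real (n choose k)"
proof -
  have "Suc n * (n choose k) = (Suc n choose Suc k) * Suc k" by (rule Suc_times_binomial_eq)
  hence "real (Suc n * (n choose k)) = real ((Suc n choose Suc k) * Suc k)" by simp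
  thus ?thesis by (simp add: algebra_simps)
qed

lemma bin_comp: "k \<le> n \<Longrightarrow> real (Suc n choose k) * (real n + 1 - real k) = (real n + 1) * real (n choose k)"
proof -
  assume k: "k \<le> n"
  have "(Suc n - k) * (Suc n choose k) = Suc n * ((Suc n - 1) choose k)" by (rule binomial_absorb_comp)
  hence "real (Suc n - k) * real (Suc n choose k) = real (Suc n) * real (n choose k)"
    by (metis diff_Suc_1 of_nat_mult)
  moreover have "real (Suc n - k) = real n + 1 - real k" using k by (simp add: of_nat_diff)
  ultimately show ?thesis by (simp add: algebra_simps)
qed

lemma bin_shift: "k \<le> n \<Longrightarrow> real (n choose Suc k) * (real k + 1) = real (n choose k) * (real n - real k)"
proof -
  assume k: "k \<le> n"
  have a: "Suc k * (n choose Suc k) = n * ((n - 1) choose k)" by (rule binomial_absorption)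
  have b: "(n - k) * (n choose k) = n * ((n - 1) choose k)" by (rule binomial_absorb_comp)
  from a b have "Suc k * (n choose Suc k) = (n - k) * (n choose k)" by simp
  hence "real (Suc k * (n choose Suc k)) = real ((n - k) * (n choose k))" by simp
  thus ?thesis using k by (simp add: of_nat_diff algebra_simps)
qed

definition cb :: "nat \<Rightarrow> real" where "cb M = real ((2 * M) choose M) / 4 ^ M"

lemma cb_Suc: "cb (Suc M) = cb M * (2 * real M + 1) / (2 * real M + 2)"
proof -
  define a where "a = real ((2*M) choose M)"
  define b where "b = real ((2*M+1) choose M)"
  define c where "c = real (2 * Suc M choose Suc M)"
  define w where "w = real M + 1"
  have w: "w \<noteq> 0" unfolding w_def by linarith
  have s: "Suc (2*M+1) = 2 * Suc M" "Suc (2*M) = 2*M+1" by simp_all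
  have e1: "c * w = (2 * w) * b"
    using bin_up[of "2*M+1" M] unfolding s by (simp add: c_def b_def w_def algebra_simps)
  have e2: "b * w = (2 * w - 1) * a"
    using bin_comp[of M "2*M"] unfolding s by (simp add: a_def b_def w_def algebra_simps)
  have c2: "c = 2 * b" using e1 w by (simp add: algebra_simps)
  have b2: "b = (2 * w - 1) * a / w" using e2 w by (simp add: field_simps)
  have m: "2 * real M + 1 = 2 * w - 1" "2 * real M + 2 = 2 * w" by (simp_all add: w_def)
  show ?thesis unfolding cb_def m c_def[symmetric] a_def[symmetric] c2 b2 using w by (simp add: field_simps)
qed

lemma cb_nonneg: "cb M \<ge> 0" by (simp add: cb_def)

lemma cb_sq: "cb M ^ 2 \<le> 1 / (2 * real M + 1)"
proof (induction M)
  case 0 thus ?case by (simp add: cb_def)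
next
  case (Suc M)
  have "cb (Suc M) ^ 2 = cb M ^ 2 * ((2 * real M + 1) / (2 * real M + 2))^2"
    by (simp add: cb_Suc power_mult_distrib power_divide)
  also have "\<dots> \<le> 1 / (2 * real M + 1) * ((2 * real M + 1) / (2 * real M + 2))^2"
    by (rule mult_right_mono[OF Suc.IH]) simp
  also have "\<dots> = (2 * real M + 1) / (2 * real M + 2)^2"
  proof -
    define u where "u = 2 * real M + 1"
    define v where "v = 2 * real M + 2"
    have p: "u \<noteq> 0" "v \<noteq> 0" unfolding u_def v_def by linarith+
    show ?thesis unfolding u_def[symmetric] v_def[symmetric] using p by (simp add: power2_eq_square field_simps)
  qed
  also have "\<dots> \<le> 1 / (2 * real (Suc M) + 1)"
  proof -
    have p: "2 * real M + 3 > 0" "(2 * real M + 2)^2 > 0" by simp_all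
    have "(2 * real M + 1) * (2 * real M + 3) \<le> (2 * real M + 2)^2" by (simp add: power2_eq_square algebra_simps)
    thus ?thesis using p by (simp add: divide_simps power2_eq_square algebra_simps)
  qed
  finally show ?case .
qed

lemma cb_le: "cb M \<le> sqrt (1 / (2 * real M + 1))"
  using real_sqrt_le_mono[OF cb_sq[of M]] cb_nonneg[of M] by simp

lemma cb_lim: "cb \<longlonglongrightarrow> 0"
proof (rule tendsto_sandwich[OF _ _ tendsto_const])
  show "\<forall>\<^sub>F n in sequentially. 0 \<le> cb n" by (simp add: cb_nonneg)
  show "\<forall>\<^sub>F n in sequentially. cb n \<le> sqrt (1 / (2 * real n + 1))" by (simp add: cb_le)
  have "(\<lambda>n. 1 / (2 * real n + 1)) \<longlonglongrightarrow> 0"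
    by real_asymp
  from tendsto_real_sqrt[OF this] show "(\<lambda>n. sqrt (1 / (2 * real n + 1))) \<longlonglongrightarrow> 0" by simp
qed

definition FF :: "nat \<Rightarrow> nat \<Rightarrow> real" where
  "FF m d = real ((2 * m + 2 * d) choose d) / (real (m + d) * 4 ^ (m + d))"

lemma FF_nonneg: "FF m d \<ge> 0" by (simp add: FF_def)

lemma FF1_partial: "(\<Sum>d<D. FF 1 d) = 1 - 2 * cb (Suc D)"
proof (induction D)
  case 0 thus ?case by (simp add: cb_def)
next
  case (Suc D)
  have e: "real ((2*D+2) choose Suc D) * (real D + 1) = real ((2*D+2) choose D) * (real (2*D+2) - real D)"
    by (rule bin_shift) simp
  have c: "cb (Suc (Suc D)) = cb (Suc D) * (2 * real (Suc D) + 1) / (2 * real (Suc D) + 2)" by (rule cb_Suc)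
  have e': "real ((2*D+2) choose D) = real ((2*D+2) choose Suc D) * (real D + 1) / (real D + 2)"
    using e by (simp add: field_simps)
  have s: "2 * Suc D = 2*D+2" by simp
  define B where "B = real ((2*D+2) choose Suc D)"
  define x where "x = real D"
  have x: "x \<ge> 0" unfolding x_def by simp
  have p: "x + 1 \<noteq> 0" "x + 2 \<noteq> 0" "2 * x + 4 \<noteq> 0" using x by linarith+
  have f1: "FF 1 D = B / (x + 2) / 4 ^ Suc D"
  proof -
    have "FF 1 D = real ((2*D+2) choose D) / (real (D + 1) * 4 ^ Suc D)"
      unfolding FF_def by (simp add: algebra_simps)
    also have "\<dots> = B * (x + 1) / (x + 2) / ((x + 1) * 4 ^ Suc D)"
      unfolding e' B_def x_def by (simp only: of_nat_add of_nat_1)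
    also have "\<dots> = B / (x + 2) / 4 ^ Suc D"
    proof -
      define y where "y = x + 2"
      define z where "z = x + 1"
      have "y \<noteq> 0" "z \<noteq> 0" using p by (simp_all add: y_def z_def)
      thus ?thesis unfolding y_def[symmetric] z_def[symmetric] by (simp add: field_simps)
    qed
    finally show ?thesis .
  qed
  have f2: "cb (Suc D) = B / 4 ^ Suc D" unfolding cb_def s B_def by simp
  have f3: "cb (Suc (Suc D)) = B / 4 ^ Suc D * (2 * x + 3) / (2 * x + 4)"
    unfolding c f2 x_def by (simp add: algebra_simps)
  have f: "FF 1 D = 2 * cb (Suc D) - 2 * cb (Suc (Suc D))"
  proof -
    define y where "y = x + 2"
    have y: "y \<noteq> 0" using p by (simp add: y_def)
    have yy: "2 * x + 3 = 2 * y - 1" "2 * x + 4 = 2 * y" by (simp_all add: y_def)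
    show ?thesis unfolding f1 f2 f3 yy y_def[symmetric] using y by (simp add: field_simps)
  qed
  show ?case unfolding sum.lessThan_Suc Suc.IH f by simp
qed


lemma FF_rec:
  assumes m: "m \<ge> 1"
  shows "(real m + 1) * (\<Sum>d<D. FF (Suc m) d) - real m * (\<Sum>d<Suc D. FF m d) = - 2 * (real D + 1) * FF m (Suc D)"
proof (induction D)
  case 0
  have "real m \<noteq> 0" using m by simp
  define a where "a = real m"
  have a: "a \<noteq> 0" "a + 1 \<noteq> 0" using m by (simp_all add: a_def)
  have n1: "2 * m + 2 * Suc 0 = Suc (2 * m + 1)" by simp
  have "FF m 0 = 1 / (a * 4 ^ m)" by (simp add: FF_def a_def)
  hence h0: "real m * FF m 0 = 1 / 4 ^ m" using a by (simp add: a_def[symmetric])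
  have "FF m (Suc 0) = (2 * a + 2) / ((a + 1) * (4 * 4 ^ m))"
    unfolding FF_def n1 binomial_1 by (simp add: a_def algebra_simps)
  also have "\<dots> = 1 / (2 * 4 ^ m)"
  proof -
    define b where "b = a + 1"
    have "2 * a + 2 = 2 * b" by (simp add: b_def)
    thus ?thesis unfolding b_def[symmetric] using a(2) by (simp add: b_def[symmetric] field_simps)
  qed
  finally have h1: "FF m (Suc 0) = 1 / (2 * 4 ^ m)" .
  show ?case using h0 h1 by simp
next
  case (Suc D)
  define a where "a = real m"
  define t where "t = real D"
  define l where "l = a + t + 1"
  define e where "e = 2 * a + t + 2"
  define q where "q = (4::real) ^ (m + D + 1)"
  define B where "B = real ((2*m+2*D+2) choose Suc D)"
  define X where "X = real ((2*m+2*D+2) choose D)"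
  define Z where "Z = real (Suc (2*m+2*D+2) choose Suc D)"
  define Y where "Y = real (Suc (Suc (2*m+2*D+2)) choose Suc (Suc D))"
  have pos: "a \<ge> 1" "t \<ge> 0" using m by (simp_all add: a_def t_def)
  have nz: "l \<noteq> 0" "e \<noteq> 0" "t + 2 \<noteq> 0" "l + 1 \<noteq> 0" "q \<noteq> 0" "t + 1 \<noteq> 0"
    using pos unfolding l_def e_def q_def by auto
  have eX: "B * (t + 1) = X * (real (2*m+2*D+2) - t)"
    unfolding B_def X_def t_def by (rule bin_shift) simp
  have hX: "X = B * (t + 1) / e"
  proof -
    have "real (2*m+2*D+2) - t = e" by (simp add: e_def a_def t_def)
    thus ?thesis using eX nz by (simp add: field_simps)
  qed
  have eZ: "Z * (real (2*m+2*D+2) + 1 - real (Suc D)) = (real (2*m+2*D+2) + 1) * B"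
    unfolding Z_def B_def by (rule bin_comp) simp
  have hZ: "Z = (2 * l + 1) * B / e"
  proof -
    have r: "real (2*m+2*D+2) + 1 - real (Suc D) = e" "real (2*m+2*D+2) + 1 = 2 * l + 1"
      by (simp_all add: e_def l_def a_def t_def)
    have "Z * e = (2 * l + 1) * B" using eZ unfolding r(1) unfolding r(2) .
    thus ?thesis using nz by (simp add: field_simps)
  qed
  have eY: "Y * (real (Suc D) + 1) = (real (Suc (2*m+2*D+2)) + 1) * Z"
    unfolding Y_def Z_def by (rule bin_up)
  define u where "u = t + 2"
  have u: "u \<noteq> 0" using nz by (simp add: u_def)
  have hY: "Y = (2 * l + 2) * Z / u"
  proof -
    have r: "real (Suc D) + 1 = u" "real (Suc (2*m+2*D+2)) + 1 = 2 * l + 2"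
      by (simp_all add: l_def a_def t_def u_def)
    have "Y * u = (2 * l + 2) * Z" using eY unfolding r(1) unfolding r(2) .
    thus ?thesis using u by (simp add: field_simps)
  qed
  have s1: "2 * m + 2 * Suc D = 2*m+2*D+2" "m + Suc D = m + D + 1" "2 * Suc m + 2 * D = 2*m+2*D+2"
    "Suc m + D = m + D + 1" "2 * m + 2 * Suc (Suc D) = Suc (Suc (2*m+2*D+2))" "m + Suc (Suc D) = Suc (m + D + 1)"
    by simp_all
  have f1: "FF m (Suc D) = B / (l * q)"
    unfolding FF_def s1 B_def q_def l_def a_def t_def by simp
  have f2: "FF (Suc m) D = X / (l * q)"
    unfolding FF_def s1 X_def q_def l_def a_def t_def by simp
  define l1 where "l1 = l + 1"
  have l1: "l1 \<noteq> 0" using nz by (simp add: l1_def)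
  have f3: "FF m (Suc (Suc D)) = Y / (l1 * (4 * q))"
    unfolding FF_def s1 Y_def q_def l1_def l_def a_def t_def by simp
  define N1 where "N1 = - 2 * (t + 1) * B + (a + 1) * X - a * B"
  have key: "N1 * (4 * l1) = - 2 * (t + 2) * Y * l"
    unfolding N1_def hY hZ hX using nz u
    apply (simp add: field_simps)
    apply (simp add: l1_def l_def e_def u_def algebra_simps)
    done
  have L: "- 2 * (t + 1) * FF m (Suc D) + (a + 1) * FF (Suc m) D - a * FF m (Suc D) = N1 / (l * q)"
    unfolding f1 f2 f3 N1_def using nz by (simp add: field_simps)
  have "N1 / (l * q) = (N1 * (4 * l1)) / (l * q * (4 * l1))" using nz l1 by simp
  also have "\<dots> = (- 2 * (t + 2) * Y * l) / (l * q * (4 * l1))" unfolding key ..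
  also have "\<dots> = - 2 * (t + 2) * (Y / (l1 * (4 * q)))" using nz l1 by (simp add: field_simps)
  also have "\<dots> = - 2 * (t + 2) * FF m (Suc (Suc D))" unfolding f3 ..
  finally have step: "- 2 * (t + 1) * FF m (Suc D) + (a + 1) * FF (Suc m) D - a * FF m (Suc D) = - 2 * (t + 2) * FF m (Suc (Suc D))"
    unfolding L .
  have "(real m + 1) * (\<Sum>d<Suc D. FF (Suc m) d) - real m * (\<Sum>d<Suc (Suc D). FF m d)
     = ((real m + 1) * (\<Sum>d<D. FF (Suc m) d) - real m * (\<Sum>d<Suc D. FF m d))
       + (a + 1) * FF (Suc m) D - a * FF m (Suc D)"
    by (simp add: a_def algebra_simps)
  also have "\<dots> = - 2 * (t + 1) * FF m (Suc D) + (a + 1) * FF (Suc m) D - a * FF m (Suc D)"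
    unfolding Suc.IH t_def by simp
  also note step
  finally show ?case by (simp add: t_def)
qed


lemma FF_le: "2 * (real D + 1) * FF m (Suc D) \<le> 2 * cb (D + (m + 1))"
proof -
  define L where "L = m + D + 1"
  have L: "real L > 0" "real D + 1 \<le> real L" unfolding L_def by simp_all
  have b: "real ((2 * m + 2 * Suc D) choose Suc D) \<le> real ((2 * L) choose L)"
  proof -
    have "2 * m + 2 * Suc D = 2 * L" by (simp add: L_def)
    thus ?thesis using binomial_maximum'[of L "Suc D"] by simp
  qed
  have "FF m (Suc D) = real ((2 * m + 2 * Suc D) choose Suc D) / (real L * 4 ^ L)"
    unfolding FF_def by (simp add: L_def)
  also have "\<dots> \<le> real ((2 * L) choose L) / (real L * 4 ^ L)"
    by (intro divide_right_mono b) simp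
  also have "\<dots> = cb L / real L" by (simp add: cb_def)
  finally have "FF m (Suc D) \<le> cb L / real L" .
  hence "2 * (real D + 1) * FF m (Suc D) \<le> 2 * (real D + 1) * (cb L / real L)"
    by (intro mult_left_mono) auto
  also have "\<dots> \<le> 2 * real L * (cb L / real L)"
    by (intro mult_right_mono) (use L cb_nonneg[of L] in auto)
  also have "\<dots> = 2 * cb L" using L by simp
  finally show ?thesis by (simp add: L_def add_ac)
qed

lemma FF_sums: "m \<ge> 1 \<Longrightarrow> FF m sums (1 / real m)"
proof (induction m)
  case 0 thus ?case by simp
next
  case (Suc m)
  show ?case
  proof (cases "m = 0")
    case True
    have "(\<lambda>D. 1 - 2 * cb (Suc D)) \<longlonglongrightarrow> 1 - 2 * 0"
      by (intro tendsto_intros LIMSEQ_Suc[OF cb_lim])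
    thus ?thesis unfolding sums_def True FF1_partial[symmetric] by simp
  next
    case False
    hence m: "m \<ge> 1" by simp
    from Suc.IH[OF m] have S: "(\<lambda>D. \<Sum>d<D. FF m d) \<longlonglongrightarrow> 1 / real m" by (simp add: sums_def)
    have R: "(\<lambda>D. 2 * (real D + 1) * FF m (Suc D)) \<longlonglongrightarrow> 0"
    proof (rule tendsto_sandwich[OF _ _ tendsto_const])
      show "\<forall>\<^sub>F D in sequentially. 0 \<le> 2 * (real D + 1) * FF m (Suc D)"
        by (simp add: FF_nonneg)
      show "\<forall>\<^sub>F D in sequentially. 2 * (real D + 1) * FF m (Suc D) \<le> 2 * cb (D + (m + 1))"
        using FF_le[of _ m] by (intro always_eventually allI) blast
      show "(\<lambda>D. 2 * cb (D + (m + 1))) \<longlonglongrightarrow> 0"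
        using tendsto_mult_right_zero[OF LIMSEQ_ignore_initial_segment[OF cb_lim, of "m + 1"], of 2]
        by simp
    qed
    have eq: "(\<Sum>d<D. FF (Suc m) d) = (real m * (\<Sum>d<Suc D. FF m d) - 2 * (real D + 1) * FF m (Suc D)) / (real m + 1)" for D
    proof -
      have "(real m + 1) * (\<Sum>d<D. FF (Suc m) d) = real m * (\<Sum>d<Suc D. FF m d) - 2 * (real D + 1) * FF m (Suc D)"
        using FF_rec[OF m, of D] by (simp add: algebra_simps)
      thus ?thesis by (simp add: field_simps)
    qed
    have "(\<lambda>D. (real m * (\<Sum>d<Suc D. FF m d) - 2 * (real D + 1) * FF m (Suc D)) / (real m + 1))
       \<longlonglongrightarrow> (real m * (1 / real m) - 0) / (real m + 1)"
      by (intro tendsto_intros LIMSEQ_Suc[OF S] R) simp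
    also have "(real m * (1 / real m) - 0) / (real m + 1) = 1 / real (Suc m)" using m by simp
    finally show ?thesis unfolding sums_def eq .
  qed
qed


definition vv :: "nat \<Rightarrow> nat \<Rightarrow> real" where
  "vv k d = 2 * real ((2 * k + 2 * d + 1) choose d) / (real (k + 1 + d) * 4 ^ (k + d))"

lemma vv_nonneg: "vv k d \<ge> 0" by (simp add: vv_def)

lemma vv_pair: "vv k (Suc d) + vv (Suc k) d = 8 * FF (Suc k) (Suc d)"
proof -
  have s: "2 * k + 2 * Suc d + 1 = 2*k+2*d+3" "2 * Suc k + 2 * d + 1 = 2*k+2*d+3"
     "k + 1 + Suc d = k + d + 2" "Suc k + 1 + d = k + d + 2" "k + Suc d = k + d + 1" "Suc k + d = k + d + 1"
     "2 * Suc k + 2 * Suc d = Suc (2*k+2*d+3)" "Suc k + Suc d = k + d + 2" by simp_all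
  define w where "w = real (k + d + 2)"
  define q where "q = (4::real) ^ (k + d + 1)"
  have w: "w \<noteq> 0" "q \<noteq> 0" by (simp_all add: w_def q_def)
  have p: "real (Suc (2*k+2*d+3) choose Suc d) = real ((2*k+2*d+3) choose d) + real ((2*k+2*d+3) choose Suc d)"
    by (simp only: binomial_Suc_Suc of_nat_add)
  have q4: "(4::real) ^ (k + d + 2) = 4 * q" by (simp add: q_def)
  show ?thesis unfolding vv_def FF_def s p w_def[symmetric] q_def[symmetric] q4 using w
    by (simp add: field_simps)
qed

lemma vv0: "vv k 0 = 8 * FF (Suc k) 0"
proof -
  define w where "w = real (k + 1)"
  have w: "w \<noteq> 0" by (simp add: w_def)
  have s: "k + 1 + 0 = k + 1" "Suc k + 0 = k + 1" by simp_all
  show ?thesis unfolding vv_def FF_def s w_def[symmetric] using w by (simp add: field_simps)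
qed

lemma FF_summable: "m \<ge> 1 \<Longrightarrow> summable (FF m)"
  using FF_sums sums_summable by blast

lemma vv_summable: "summable (vv k)"
proof -
  have "summable (\<lambda>d. 8 * FF (Suc k) (Suc d))"
    using FF_summable[of "Suc k"] by (intro summable_mult) (simp add: summable_Suc_iff)
  hence "summable (\<lambda>d. vv k (Suc d))"
  proof (rule summable_comparison_test'[where N = 0])
    fix n :: nat
    show "norm (vv k (Suc n)) \<le> 8 * FF (Suc k) (Suc n)"
      using vv_pair[of k n] vv_nonneg[of "Suc k" n] vv_nonneg[of k "Suc n"] by simp
  qed
  thus ?thesis by (simp add: summable_Suc_iff)
qed

definition cc :: "nat \<Rightarrow> real" where "cc k = suminf (vv k)"

lemma cc_nonneg: "cc k \<ge> 0"
  unfolding cc_def by (intro suminf_nonneg vv_summable vv_nonneg)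

lemma cc_rec: "cc k + cc (Suc k) = 8 / real (Suc k)"
proof -
  have s1: "summable (\<lambda>d. vv k (Suc d))" using vv_summable[of k] by (simp add: summable_Suc_iff)
  have e1: "cc k = vv k 0 + (\<Sum>d. vv k (Suc d))"
    unfolding cc_def using suminf_split_head[OF vv_summable[of k]] by simp
  have sF: "summable (FF (Suc k))" by (rule FF_summable) simp
  have eF: "(\<Sum>d. FF (Suc k) d) = 1 / real (Suc k)" using FF_sums[of "Suc k"] by (simp add: sums_iff)
  have "(\<Sum>d. vv k (Suc d)) + cc (Suc k) = (\<Sum>d. vv k (Suc d) + vv (Suc k) d)"
    unfolding cc_def using s1 vv_summable[of "Suc k"] by (simp add: suminf_add)
  also have "\<dots> = (\<Sum>d. 8 * FF (Suc k) (Suc d))" by (simp add: vv_pair)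
  also have "\<dots> = 8 * (\<Sum>d. FF (Suc k) (Suc d))"
    using sF by (intro suminf_mult) (simp add: summable_Suc_iff)
  also have "(\<Sum>d. FF (Suc k) (Suc d)) = 1 / real (Suc k) - FF (Suc k) 0"
    using suminf_split_head[OF sF] eF by simp
  finally have "(\<Sum>d. vv k (Suc d)) + cc (Suc k) = 8 * (1 / real (Suc k) - FF (Suc k) 0)" .
  thus ?thesis using e1 vv0[of k] by (simp add: algebra_simps)
qed

lemma cc_bound: "cc (Suc k) \<le> 8 / real (Suc k)"
  using cc_rec[of k] cc_nonneg[of k] by linarith

lemma cc_lim: "cc \<longlonglongrightarrow> 0"
proof -
  have "(\<lambda>k. cc (Suc k)) \<longlonglongrightarrow> 0"
  proof (rule tendsto_sandwich[OF _ _ tendsto_const])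
    show "\<forall>\<^sub>F k in sequentially. 0 \<le> cc (Suc k)" by (simp add: cc_nonneg)
    show "\<forall>\<^sub>F k in sequentially. cc (Suc k) \<le> 8 / real (Suc k)" by (intro always_eventually allI cc_bound)
    show "(\<lambda>k. 8 / real (Suc k)) \<longlonglongrightarrow> 0" by real_asymp
  qed
  thus ?thesis by (rule LIMSEQ_imp_Suc)
qed

lemma cc_partial: "(\<Sum>i<N. (-1) ^ i * (8 / real (k + 1 + i))) = cc k - (-1) ^ N * cc (k + N)"
proof (induction N)
  case 0 thus ?case by simp
next
  case (Suc N)
  have c: "cc (k + N) = 8 / real (Suc (k + N)) - cc (Suc (k + N))" using cc_rec[of "k + N"] by linarith
  have h: "(-1) ^ N * cc (k + N) = (-1) ^ N * (8 / real (k + 1 + N)) - (-1) ^ N * cc (k + Suc N)"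
    unfolding c right_diff_distrib by simp
  have "(\<Sum>i<Suc N. (-1) ^ i * (8 / real (k + 1 + i))) = (\<Sum>i<N. (-1) ^ i * (8 / real (k + 1 + i))) + (-1) ^ N * (8 / real (k + 1 + N))"
    by simp
  also have "\<dots> = cc k - (-1) ^ Suc N * cc (k + Suc N)" unfolding Suc.IH using h by simp
  finally show ?case .
qed

lemma cc_alt: "(\<lambda>i. (-1) ^ i * (8 / real (k + 1 + i))) sums cc k"
proof -
  have "(\<lambda>N. (-1) ^ N * cc (k + N)) \<longlonglongrightarrow> 0"
  proof (rule tendsto_norm_zero_cancel)
    have "(\<lambda>N. cc (N + k)) \<longlonglongrightarrow> 0" by (rule LIMSEQ_ignore_initial_segment[OF cc_lim])
    thus "(\<lambda>N. norm ((-1) ^ N * cc (k + N))) \<longlonglongrightarrow> 0"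
      by (simp add: abs_mult power_abs abs_of_nonneg cc_nonneg add.commute)
  qed
  hence "(\<lambda>N. cc k - (-1) ^ N * cc (k + N)) \<longlonglongrightarrow> cc k - 0" by (intro tendsto_intros)
  thus ?thesis unfolding sums_def cc_partial by simp
qed


lemma alt_partial:
  assumes n: "n \<ge> 1"
  shows "K \<le> n \<Longrightarrow> (\<Sum>k\<le>K. (-1) ^ k * (2 * real k + 1) * real ((2*n+1) choose (n - k)))
     = (-1) ^ K * (real K + 1) * (real n - real K) * real ((2*n+1) choose (n - K)) / real n"
proof (induction K)
  case 0
  have "real n \<noteq> 0" using n by simp
  thus ?case by simp
next
  case (Suc K)
  hence K: "K < n" by simp
  define Ca where "Ca = real ((2*n+1) choose (n - K))"
  define Cb where "Cb = real ((2*n+1) choose (n - Suc K))"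
  have e: "real ((2*n+1) choose Suc (n - Suc K)) * (real (n - Suc K) + 1) = real ((2*n+1) choose (n - Suc K)) * (real (2*n+1) - real (n - Suc K))"
    by (rule bin_shift) simp
  have s: "Suc (n - Suc K) = n - K" using K by simp
  have r1: "real (n - Suc K) + 1 = real n - real K" "real (2*n+1) - real (n - Suc K) = real n + real K + 2"
    using K by (simp_all add: of_nat_diff)
  have rel: "Ca * (real n - real K) = Cb * (real n + real K + 2)"
    using e unfolding s r1 Ca_def Cb_def .
  define x where "x = real n"
  have x: "x \<noteq> 0" using n by (simp add: x_def)
  have "(\<Sum>k\<le>Suc K. (-1) ^ k * (2 * real k + 1) * real ((2*n+1) choose (n - k)))
     = (-1) ^ K * (real K + 1) * (real n - real K) * Ca / real n + (-1) ^ Suc K * (2 * real (Suc K) + 1) * Cb"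
    using Suc.IH K by (simp add: Ca_def Cb_def)
  also have "\<dots> = (-1) ^ K * ((real K + 1) * (Ca * (real n - real K)) / real n - (2 * real K + 3) * Cb)"
    by (simp add: algebra_simps)
  also have "\<dots> = (-1) ^ K * ((real K + 1) * (Cb * (real n + real K + 2)) / real n - (2 * real K + 3) * Cb)"
    unfolding rel ..
  also have "\<dots> = (-1) ^ Suc K * (real (Suc K) + 1) * (real n - real (Suc K)) * Cb / real n"
    unfolding x_def[symmetric] using x by (simp add: field_simps)
  finally show ?case by (simp add: Cb_def)
qed

lemma alt_zero: "n \<ge> 1 \<Longrightarrow> (\<Sum>k\<le>n. (-1) ^ k * real ((2*n+1) choose (n - k)) * (2 * real k + 1)) = 0"
  using alt_partial[of n n] by (simp add: algebra_simps)

definition xo :: "nat \<Rightarrow> real" where "xo k = 2 * real k + 1"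

lemma xo_pos: "xo k > 0" by (simp add: xo_def)

definition Sgw :: "nat \<Rightarrow> (nat \<Rightarrow> real) \<Rightarrow> real" where
  "Sgw n w = (\<Sum>k\<le>n. (-1) ^ k * real ((2*n+1) choose (n - k)) * w k)"

lemma term_rel: "k \<le> n \<Longrightarrow> real ((2 * Suc n + 1) choose (Suc n - k)) * (xo (n+1) ^ 2 - xo k ^ 2)
   = 8 * (real n + 1) * (2 * real n + 3) * real ((2*n+1) choose (n - k))"
proof -
  assume k: "k \<le> n"
  define r where "r = n - k"
  have kr: "k = n - r" "r \<le> n" by (simp_all add: r_def k)
  have e1: "real (Suc (2*n+2) choose Suc r) * (real r + 1) = (real (2*n+2) + 1) * real ((2*n+2) choose r)"
    by (rule bin_up)
  have e2: "real (Suc (2*n+1) choose r) * (real (2*n+1) + 1 - real r) = (real (2*n+1) + 1) * real ((2*n+1) choose r)"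
    by (rule bin_comp) (use kr in simp)
  have s: "Suc (2*n+2) = 2*n+3" "Suc (2*n+1) = 2*n+2" "Suc n - k = Suc r" "2 * Suc n + 1 = 2*n+3" using k by (simp_all add: r_def)
  have x: "xo (n+1) ^ 2 - xo k ^ 2 = 4 * (real r + 1) * (2 * real n + 2 - real r)"
    using kr by (simp add: xo_def of_nat_diff power2_eq_square algebra_simps)
  define A where "A = real ((2*n+3) choose Suc r)"
  define B where "B = real ((2*n+2) choose r)"
  define C where "C = real ((2*n+1) choose r)"
  have e1': "A * (real r + 1) = (2 * real n + 3) * B" using e1 unfolding s A_def B_def by simp
  have e2': "B * (2 * real n + 2 - real r) = (2 * real n + 2) * C" using e2 unfolding s B_def C_def by (simp add: algebra_simps)
  have "A * (4 * (real r + 1) * (2 * real n + 2 - real r)) = 4 * (A * (real r + 1)) * (2 * real n + 2 - real r)"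
    by (simp add: algebra_simps)
  also have "\<dots> = 4 * (2 * real n + 3) * (B * (2 * real n + 2 - real r))" unfolding e1' by (simp add: algebra_simps)
  also have "\<dots> = 8 * (real n + 1) * (2 * real n + 3) * C" unfolding e2' by (simp add: algebra_simps)
  finally show ?thesis unfolding s x A_def[symmetric] C_def[symmetric] r_def[symmetric] by simp
qed

lemma Sgw_rec: "xo (n+1) ^ 2 * Sgw (Suc n) w - Sgw (Suc n) (\<lambda>k. xo k ^ 2 * w k) = 8 * (real n + 1) * (2 * real n + 3) * Sgw n w"
proof -
  have "xo (n+1) ^ 2 * Sgw (Suc n) w - Sgw (Suc n) (\<lambda>k. xo k ^ 2 * w k)
      = (\<Sum>k\<le>Suc n. (-1) ^ k * (real ((2 * Suc n + 1) choose (Suc n - k)) * (xo (n+1) ^ 2 - xo k ^ 2)) * w k)"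
    unfolding Sgw_def sum_distrib_left sum_subtractf[symmetric] by (intro sum.cong refl) (simp add: algebra_simps)
  also have "\<dots> = (\<Sum>k\<le>n. (-1) ^ k * (real ((2 * Suc n + 1) choose (Suc n - k)) * (xo (n+1) ^ 2 - xo k ^ 2)) * w k)"
    by (simp add: sum.atMost_Suc del: mult_Suc_right)
  also have "\<dots> = (\<Sum>k\<le>n. (-1) ^ k * (8 * (real n + 1) * (2 * real n + 3) * real ((2*n+1) choose (n - k))) * w k)"
  proof (intro sum.cong refl)
    fix k assume "k \<in> {..n}"
    hence "k \<le> n" by simp
    show "(-1) ^ k * (real ((2 * Suc n + 1) choose (Suc n - k)) * (xo (n+1) ^ 2 - xo k ^ 2)) * w k
      = (-1) ^ k * (8 * (real n + 1) * (2 * real n + 3) * real ((2*n+1) choose (n - k))) * w k"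
      by (simp only: term_rel[OF \<open>k \<le> n\<close>])
  qed
  also have "\<dots> = 8 * (real n + 1) * (2 * real n + 3) * Sgw n w"
    unfolding Sgw_def sum_distrib_left by (intro sum.cong refl) (simp add: algebra_simps)
  finally show ?thesis .
qed


definition Sg :: "nat \<Rightarrow> nat \<Rightarrow> real" where
  "Sg n j = Sgw n (\<lambda>k. 1 / xo k ^ (2 * j + 1))"

lemma Sg0: "Sg 0 j = 1" by (simp add: Sg_def Sgw_def xo_def)

lemma Sg_rec0: "xo (n+1) ^ 2 * Sg (Suc n) 0 = 8 * (real n + 1) * (2 * real n + 3) * Sg n 0"
proof -
  have "Sgw (Suc n) (\<lambda>k. xo k ^ 2 * (1 / xo k ^ (2 * 0 + 1))) = Sgw (Suc n) xo"
    unfolding Sgw_def using xo_pos by (intro sum.cong refl) (simp add: power2_eq_square)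
  also have "\<dots> = 0"
    using alt_zero[of "Suc n"] unfolding Sgw_def xo_def by (simp add: algebra_simps)
  finally show ?thesis using Sgw_rec[of n "\<lambda>k. 1 / xo k ^ (2 * 0 + 1)"] unfolding Sg_def by simp
qed

lemma Sg_recS: "xo (n+1) ^ 2 * Sg (Suc n) (Suc j) - Sg (Suc n) j = 8 * (real n + 1) * (2 * real n + 3) * Sg n (Suc j)"
proof -
  have "Sgw (Suc n) (\<lambda>k. xo k ^ 2 * (1 / xo k ^ (2 * Suc j + 1))) = Sgw (Suc n) (\<lambda>k. 1 / xo k ^ (2 * j + 1))"
  proof -
    have "xo k ^ 2 * (1 / xo k ^ (2 * Suc j + 1)) = 1 / xo k ^ (2 * j + 1)" for k
    proof -
      have e: "xo k ^ (2 * Suc j + 1) = xo k ^ 2 * xo k ^ (2 * j + 1)" by (simp add: power_add[symmetric])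
      have a: "xo k ^ 2 \<noteq> 0" using xo_pos[of k] by simp
      have g: "a \<noteq> 0 \<Longrightarrow> a * (1 / (a * b)) = 1 / b" for a b :: real by simp
      show ?thesis unfolding e by (rule g[OF a])
    qed
    thus ?thesis unfolding Sgw_def by simp
  qed
  thus ?thesis using Sgw_rec[of n "\<lambda>k. 1 / xo k ^ (2 * Suc j + 1)"] unfolding Sg_def by simp
qed

lemma cb_pos: "cb n > 0" by (simp add: cb_def)

lemma Sg0_closed: "Sg n 0 = 4 ^ n / (2 * (real n + 1) * cb (Suc n))"
proof (induction n)
  case 0 thus ?case by (simp add: Sg0 cb_def)
next
  case (Suc n)
  define x where "x = 2 * real n + 3"
  define c where "c = cb (Suc n)"
  define w where "w = real n + 1"
  have nz: "x \<noteq> 0" "c \<noteq> 0" "w \<noteq> 0" using cb_pos[of "Suc n"] by (simp_all add: x_def c_def w_def)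
  have xo: "xo (n + 1) = x" by (simp add: xo_def x_def)
  have "x ^ 2 * Sg (Suc n) 0 = 8 * w * x * Sg n 0" using Sg_rec0[of n] unfolding xo by (simp add: w_def x_def)
  hence "Sg (Suc n) 0 = 8 * w * Sg n 0 / x" using nz by (simp add: field_simps power2_eq_square)
  also have "\<dots> = 4 * 4 ^ n / (x * c)" unfolding Suc.IH c_def[symmetric] w_def[symmetric] using nz by (simp add: field_simps)
  also have "\<dots> = 4 ^ Suc n / (2 * (real (Suc n) + 1) * cb (Suc (Suc n)))"
  proof -
    have "cb (Suc (Suc n)) = c * x / (2 * (w + 1))" unfolding c_def cb_Suc[of "Suc n"] by (simp add: x_def w_def algebra_simps)
    moreover have "real (Suc n) + 1 = w + 1" by (simp add: w_def)
    moreover have "w + 1 \<noteq> 0" by (simp add: w_def)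
    ultimately show ?thesis using nz by (simp add: field_simps)
  qed
  finally show ?case .
qed

lemma cbw_Sg: "cbw (Suc n) = 2 * Sg n 0 / ((real n + 1) * 4 ^ n)"
proof -
  have "cbw (Suc n) = 1 / ((real n + 1) ^ 2 * cb (Suc n))"
    unfolding cbw_def cb_def by (simp add: field_simps)
  also have "\<dots> = 2 * Sg n 0 / ((real n + 1) * 4 ^ n)"
  proof -
    define c where "c = cb (Suc n)"
    define w where "w = real n + 1"
    define q where "q = (4::real) ^ n"
    have nz: "c \<noteq> 0" "w \<noteq> 0" "q \<noteq> 0" using cb_pos[of "Suc n"] by (simp_all add: c_def w_def q_def)
    show ?thesis unfolding Sg0_closed c_def[symmetric] w_def[symmetric] q_def[symmetric] using nz
      by (simp add: field_simps power2_eq_square)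
  qed
  finally show ?thesis .
qed

lemma Sg_step:
  assumes "Sg n (Suc j) = Sg n 0 * H (Suc n)" "Sg (Suc n) j = Sg (Suc n) 0 * G (Suc (Suc n))"
    "H (Suc (Suc n)) = H (Suc n) + G (Suc (Suc n)) / xo (Suc n) ^ 2"
  shows "Sg (Suc n) (Suc j) = Sg (Suc n) 0 * H (Suc (Suc n))"
proof -
  define x where "x = xo (Suc n)"
  have x: "x \<noteq> 0" unfolding x_def using xo_pos[of "Suc n"] by simp
  define c where "c = 8 * (real n + 1) * (2 * real n + 3)"
  have r0: "x ^ 2 * Sg (Suc n) 0 = c * Sg n 0" using Sg_rec0[of n] by (simp add: x_def c_def)
  have rS: "x ^ 2 * Sg (Suc n) (Suc j) = c * Sg n (Suc j) + Sg (Suc n) j" using Sg_recS[of n j] by (simp add: x_def c_def)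
  have "x ^ 2 * Sg (Suc n) (Suc j) = c * Sg n 0 * H (Suc n) + Sg (Suc n) 0 * G (Suc (Suc n))"
    unfolding rS assms(1,2) by simp
  also have "\<dots> = x ^ 2 * Sg (Suc n) 0 * H (Suc n) + Sg (Suc n) 0 * G (Suc (Suc n))" unfolding r0[symmetric] by simp
  also have "\<dots> = x ^ 2 * (Sg (Suc n) 0 * H (Suc (Suc n)))" unfolding assms(3) x_def[symmetric] using x
    by (simp add: field_simps)
  finally show ?thesis using x by simp
qed

definition h1 :: "nat \<Rightarrow> real" where "h1 n = odd_harm 2 n"
definition h2 :: "nat \<Rightarrow> real" where "h2 n = (odd_harm 2 n ^ 2 + odd_harm 4 n) / 2"
definition h3 :: "nat \<Rightarrow> real" where
  "h3 n = (odd_harm 2 n ^ 3 + 3 * odd_harm 2 n * odd_harm 4 n + 2 * odd_harm 6 n) / 6"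

lemma odd_harm_Suc: "odd_harm m (Suc n) = odd_harm m n + 1 / xo n ^ m"
  unfolding odd_harm_def xo_def by (simp add: algebra_simps)

lemma odd_harm_1: "odd_harm m (Suc 0) = 1"
  using odd_harm_Suc[of m 0] by (simp add: odd_harm_def xo_def)

lemma h1_step: "h1 (Suc (Suc n)) = h1 (Suc n) + 1 / xo (Suc n) ^ 2"
  unfolding h1_def odd_harm_Suc[of _ "Suc n"] by simp

lemma h2_step: "h2 (Suc (Suc n)) = h2 (Suc n) + h1 (Suc (Suc n)) / xo (Suc n) ^ 2"
proof -
  define x where "x = xo (Suc n)"
  have x: "x \<noteq> 0" unfolding x_def using xo_pos[of "Suc n"] by simp
  show ?thesis unfolding h1_def h2_def odd_harm_Suc[of _ "Suc n"] x_def[symmetric] using x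
    by (simp add: field_simps eval_nat_numeral)
qed

lemma h3_step: "h3 (Suc (Suc n)) = h3 (Suc n) + h2 (Suc (Suc n)) / xo (Suc n) ^ 2"
proof -
  define x where "x = xo (Suc n)"
  have x: "x \<noteq> 0" unfolding x_def using xo_pos[of "Suc n"] by simp
  show ?thesis unfolding h3_def h2_def odd_harm_Suc[of _ "Suc n"] x_def[symmetric] using x
    by (simp add: field_simps eval_nat_numeral)
qed

lemma Sg1: "Sg n 1 = Sg n 0 * h1 (Suc n)"
proof (induction n)
  case 0 thus ?case by (simp add: Sg0 h1_def odd_harm_1)
next
  case (Suc n)
  have "Sg (Suc n) (Suc 0) = Sg (Suc n) 0 * h1 (Suc (Suc n))"
    by (rule Sg_step[where G = "\<lambda>_. 1"]) (use Suc.IH h1_step in auto)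
  thus ?case by simp
qed

lemma Sg2: "Sg n 2 = Sg n 0 * h2 (Suc n)"
proof (induction n)
  case 0 thus ?case by (simp add: Sg0 h2_def odd_harm_1)
next
  case (Suc n)
  have "Sg (Suc n) (Suc 1) = Sg (Suc n) 0 * h2 (Suc (Suc n))"
    by (rule Sg_step[where G = h1]) (use Suc.IH Sg1 h2_step in \<open>auto simp: numeral_2_eq_2\<close>)
  thus ?case by (simp add: numeral_2_eq_2)
qed

lemma Sg3: "Sg n 3 = Sg n 0 * h3 (Suc n)"
proof (induction n)
  case 0 thus ?case by (simp add: Sg0 h3_def odd_harm_1)
next
  case (Suc n)
  have "Sg (Suc n) (Suc 2) = Sg (Suc n) 0 * h3 (Suc (Suc n))"
    by (rule Sg_step[where G = h2]) (use Suc.IH Sg2 h3_step in \<open>auto simp: numeral_3_eq_3\<close>)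
  thus ?case by (simp add: numeral_3_eq_3)
qed

lemma vv_diag: "k \<le> n \<Longrightarrow> vv k (n - k) = 2 * real ((2*n+1) choose (n - k)) / ((real n + 1) * 4 ^ n)"
proof -
  assume k: "k \<le> n"
  have s: "2 * k + 2 * (n - k) + 1 = 2*n+1" "k + 1 + (n - k) = n + 1" "k + (n - k) = n" using k by simp_all
  show ?thesis unfolding vv_def s by simp
qed

lemma cbw_expand:
  "cbw (Suc n) * (Sg n j / Sg n 0) = (\<Sum>k\<le>n. vv k (n - k) * ((-1) ^ k / xo k ^ (2 * j + 1)))"
proof -
  have S0: "Sg n 0 \<noteq> 0" unfolding Sg0_closed using cb_pos[of "Suc n"] by simp
  have "cbw (Suc n) * (Sg n j / Sg n 0) = 2 * Sg n j / ((real n + 1) * 4 ^ n)"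
    unfolding cbw_Sg using S0 by simp
  also have "\<dots> = (\<Sum>k\<le>n. 2 * real ((2*n+1) choose (n - k)) / ((real n + 1) * 4 ^ n) * ((-1) ^ k / xo k ^ (2 * j + 1)))"
    unfolding Sg_def Sgw_def sum_divide_distrib sum_distrib_left by (intro sum.cong refl) (simp add: field_simps)
  also have "\<dots> = (\<Sum>k\<le>n. vv k (n - k) * ((-1) ^ k / xo k ^ (2 * j + 1)))"
    by (intro sum.cong refl) (simp add: vv_diag)
  finally show ?thesis .
qed


lemma reindex_tri:
  fixes f :: "nat \<Rightarrow> nat \<Rightarrow> 'a :: comm_monoid_add" and N :: nat
  shows "(\<Sum>n<N. \<Sum>k\<le>n. f k (n - k)) = (\<Sum>k<N. \<Sum>d<N - k. f k d)"
proof (induction N)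
  case 0 thus ?case by simp
next
  case (Suc N)
  have "(\<Sum>k<Suc N. \<Sum>d<Suc N - k. f k d) = (\<Sum>k<N. \<Sum>d<Suc N - k. f k d) + f N 0"
    by simp
  also have "(\<Sum>k<N. \<Sum>d<Suc N - k. f k d) = (\<Sum>k<N. (\<Sum>d<N - k. f k d) + f k (N - k))"
  proof (intro sum.cong refl)
    fix k assume "k \<in> {..<N}"
    hence "Suc N - k = Suc (N - k)" by auto
    thus "(\<Sum>d<Suc N - k. f k d) = (\<Sum>d<N - k. f k d) + f k (N - k)" by simp
  qed
  also have "\<dots> = (\<Sum>k<N. \<Sum>d<N - k. f k d) + (\<Sum>k<N. f k (N - k))" by (simp add: sum.distrib)
  finally have "(\<Sum>k<Suc N. \<Sum>d<Suc N - k. f k d) = (\<Sum>k<N. \<Sum>d<N - k. f k d) + (\<Sum>k\<le>N. f k (N - k))"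
    by (simp add: lessThan_Suc_atMost[symmetric] add.assoc)
  thus ?case using Suc.IH by simp
qed

lemma xo_ge: "p \<ge> 1 \<Longrightarrow> xo k ^ p \<ge> real k + 1"
proof -
  assume p: "p \<ge> 1"
  have "real k + 1 \<le> xo k" by (simp add: xo_def)
  also have "xo k \<le> xo k ^ p" using p by (intro self_le_power) (auto simp: xo_def)
  finally show ?thesis .
qed

lemma summable_inv_sq: "summable (\<lambda>k. 1 / (real k + 1) ^ 2)"
proof -
  have "summable (\<lambda>k. inverse (real (Suc k)) ^ 2)"
    using inverse_power_summable[of 2] by (subst summable_Suc_iff) (simp add: power_inverse)
  thus ?thesis by (simp add: power_inverse inverse_eq_divide add.commute power_one_over)
qed

lemma cc_weight_summable: assumes "p \<ge> 1" shows "summable (\<lambda>k. cc k / xo k ^ p)"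
proof -
  have "summable (\<lambda>k. cc (Suc k) / xo (Suc k) ^ p)"
  proof (rule summable_comparison_test'[where N = 0])
    show "summable (\<lambda>k. 8 * (1 / (real k + 1) ^ 2))" by (intro summable_mult summable_inv_sq)
    fix k :: nat
    have x: "xo (Suc k) ^ p \<ge> real k + 1" using xo_ge[OF assms, of "Suc k"] by simp
    have c: "cc (Suc k) \<le> 8 / (real k + 1)" using cc_bound[of k] by (simp add: add.commute)
    have "cc (Suc k) / xo (Suc k) ^ p \<le> (8 / (real k + 1)) / (real k + 1)"
      by (intro frac_le c x cc_nonneg) auto
    thus "norm (cc (Suc k) / xo (Suc k) ^ p) \<le> 8 * (1 / (real k + 1) ^ 2)"
      using cc_nonneg[of "Suc k"] xo_pos[of "Suc k"] by (simp add: power2_eq_square)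
  qed
  thus ?thesis by (rule summable_Suc_iff[THEN iffD1])
qed

lemma main_sums:
  assumes p: "p \<ge> 1"
  shows "(\<lambda>n. \<Sum>k\<le>n. vv k (n - k) * ((-1) ^ k / xo k ^ p)) sums (\<Sum>k. (-1) ^ k / xo k ^ p * cc k)"
proof -
  define s where "s k = (-1) ^ k / xo k ^ p" for k
  define a where "a k N = (if k < N then s k * (\<Sum>d<N - k. vv k d) else 0)" for k N
  have lim: "(\<lambda>N. a k N) \<longlonglongrightarrow> s k * cc k" for k
  proof (rule LIMSEQ_offset[where k = k])
    have "(\<lambda>N. s k * (\<Sum>d<N. vv k d)) \<longlonglongrightarrow> s k * cc k"
      unfolding cc_def by (intro tendsto_intros summable_LIMSEQ vv_summable)
    moreover have "eventually (\<lambda>N. s k * (\<Sum>d<N. vv k d) = a k (N + k)) sequentially"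
      using eventually_gt_at_top[of 0] by eventually_elim (simp add: a_def)
    ultimately show "(\<lambda>N. a k (N + k)) \<longlonglongrightarrow> s k * cc k" by (rule Lim_transform_eventually)
  qed
  have bound: "norm (a k N) \<le> cc k / xo k ^ p" for k N
  proof (cases "k < N")
    case True
    have "(\<Sum>d<N - k. vv k d) \<le> cc k"
      unfolding cc_def by (intro sum_le_suminf vv_summable) (auto simp: vv_nonneg)
    moreover have "0 \<le> (\<Sum>d<N - k. vv k d)" by (intro sum_nonneg vv_nonneg)
    ultimately show ?thesis using True xo_pos[of k]
      by (auto simp: a_def s_def abs_mult power_abs abs_divide intro!: divide_right_mono)
  qed (use cc_nonneg[of k] xo_pos[of k] in \<open>simp add: a_def\<close>)
  have T: "(\<lambda>N. suminf (\<lambda>k. a k N)) \<longlonglongrightarrow> suminf (\<lambda>k. s k * cc k)"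
    by (rule tannerys_theorem[OF lim _ cc_weight_summable[OF p], THEN conjunct2, THEN conjunct2])
       (auto intro!: always_eventually simp: bound[unfolded real_norm_def])
  have "suminf (\<lambda>k. a k N) = (\<Sum>k<N. a k N)" for N
    by (rule suminf_finite) (auto simp: a_def)
  also have "(\<Sum>k<N. a k N) = (\<Sum>k<N. \<Sum>d<N - k. vv k d * s k)" for N
    unfolding a_def by (simp add: sum_distrib_left mult.commute)
  also have "\<dots> N = (\<Sum>n<N. \<Sum>k\<le>n. vv k (n - k) * s k)" for N
    by (rule reindex_tri[symmetric])
  finally show ?thesis using T unfolding sums_def s_def by (simp add: mult.commute)
qed


lemma alt_bound:
  fixes a :: "nat \<Rightarrow> real"
  assumes "\<And>n. a (Suc n) \<le> a n" "\<And>n. 0 \<le> a n"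
  shows "0 \<le> (\<Sum>i<N. (-1) ^ i * a i) \<and> (\<Sum>i<N. (-1) ^ i * a i) \<le> a 0"
  using assms
proof (induction N arbitrary: a)
  case 0 thus ?case by simp
next
  case (Suc N)
  have IH: "0 \<le> (\<Sum>i<N. (-1) ^ i * a (Suc i)) \<and> (\<Sum>i<N. (-1) ^ i * a (Suc i)) \<le> a (Suc 0)"
    by (rule Suc.IH) (use Suc.prems in auto)
  have "(\<Sum>i<Suc N. (-1) ^ i * a i) = a 0 - (\<Sum>i<N. (-1) ^ i * a (Suc i))"
    unfolding sum.lessThan_Suc_shift by (simp add: sum_negf[symmetric])
  thus ?case using IH Suc.prems(1)[of 0] by simp
qed

lemma cc16: "(\<lambda>i. (-1) ^ i / (xo k + xo i)) sums (cc k / 16)"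
proof -
  have "(\<lambda>i. (-1) ^ i * (8 / real (k + 1 + i)) / 16) sums (cc k / 16)"
    by (intro sums_divide cc_alt)
  moreover have "(\<lambda>i. (-1) ^ i * (8 / real (k + 1 + i)) / 16) = (\<lambda>i. (-1) ^ i / (xo k + xo i))"
  proof
    fix i
    define w where "w = real (k + 1 + i)"
    have w: "w \<noteq> 0" by (simp add: w_def)
    have "xo k + xo i = 2 * w" by (simp add: xo_def w_def)
    thus "(-1) ^ i * (8 / real (k + 1 + i)) / 16 = (-1) ^ i / (xo k + xo i)"
      unfolding w_def[symmetric] using w by (simp add: field_simps)
  qed
  ultimately show ?thesis by simp
qed

definition Q :: "nat \<Rightarrow> nat \<Rightarrow> real" where
  "Q p N = (\<Sum>k<N. ((-1) ^ k / xo k ^ p) * (\<Sum>i<N. (-1) ^ i / (xo k + xo i)))"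

lemma Q_lim:
  assumes p: "p \<ge> 1"
  shows "(\<lambda>N. Q p N) \<longlonglongrightarrow> (\<Sum>k. (-1) ^ k / xo k ^ p * cc k) / 16"
proof -
  define s where "s k = (-1) ^ k / xo k ^ p" for k
  define a where "a k N = (if k < N then s k * (\<Sum>i<N. (-1) ^ i / (xo k + xo i)) else 0)" for k N
  have lim: "(\<lambda>N. a k N) \<longlonglongrightarrow> s k * (cc k / 16)" for k
  proof -
    have "(\<lambda>N. s k * (\<Sum>i<N. (-1) ^ i / (xo k + xo i))) \<longlonglongrightarrow> s k * (cc k / 16)"
      using cc16[of k] unfolding sums_def by (intro tendsto_intros)
    moreover have "eventually (\<lambda>N. s k * (\<Sum>i<N. (-1) ^ i / (xo k + xo i)) = a k N) sequentially"
      using eventually_gt_at_top[of k] by eventually_elim (simp add: a_def)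
    ultimately show ?thesis by (rule Lim_transform_eventually)
  qed
  have bound: "norm (a k N) \<le> 1 / (real k + 1) ^ 2" for k N
  proof (cases "k < N")
    case True
    have ab: "0 \<le> (\<Sum>i<N. (-1) ^ i * (1 / (xo k + xo i))) \<and> (\<Sum>i<N. (-1) ^ i * (1 / (xo k + xo i))) \<le> 1 / (xo k + xo 0)"
    proof (rule alt_bound)
      fix n
      have "0 < xo k + xo n" "xo k + xo n \<le> xo k + xo (Suc n)" using xo_pos[of k] xo_pos[of n] by (auto simp: xo_def)
      thus "1 / (xo k + xo (Suc n)) \<le> 1 / (xo k + xo n)" by (intro frac_le) auto
      show "0 \<le> 1 / (xo k + xo n)" using xo_pos[of k] xo_pos[of n] by simp
    qed
    have "1 / (xo k + xo 0) \<le> 1 / (real k + 1)" by (intro divide_left_mono) (auto simp: xo_def)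
    hence inner: "\<bar>\<Sum>i<N. (-1) ^ i / (xo k + xo i)\<bar> \<le> 1 / (real k + 1)" using ab by simp
    have sk: "\<bar>s k\<bar> \<le> 1 / (real k + 1)"
      using xo_ge[OF p, of k] by (simp add: s_def abs_divide power_abs abs_of_pos xo_pos divide_left_mono)
    have "\<bar>a k N\<bar> = \<bar>s k\<bar> * \<bar>\<Sum>i<N. (-1) ^ i / (xo k + xo i)\<bar>" using True by (simp add: a_def abs_mult)
    also have "\<dots> \<le> (1 / (real k + 1)) * (1 / (real k + 1))" by (intro mult_mono sk inner) auto
    finally show ?thesis by (simp add: power2_eq_square)
  qed (simp add: a_def)
  have T: "(\<lambda>N. suminf (\<lambda>k. a k N)) \<longlonglongrightarrow> suminf (\<lambda>k. s k * (cc k / 16))"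
    by (rule tannerys_theorem[OF lim _ summable_inv_sq, THEN conjunct2, THEN conjunct2])
       (auto intro!: always_eventually simp: bound[unfolded real_norm_def])
  have e1: "suminf (\<lambda>k. a k N) = Q p N" for N
  proof -
    have "suminf (\<lambda>k. a k N) = (\<Sum>k<N. a k N)" by (rule suminf_finite) (auto simp: a_def)
    thus ?thesis by (simp add: a_def Q_def s_def)
  qed
  have e2: "suminf (\<lambda>k. s k * (cc k / 16)) = (\<Sum>k. (-1) ^ k / xo k ^ p * cc k) / 16"
  proof -
    have sm: "summable (\<lambda>k. s k * cc k)"
    proof (rule summable_comparison_test'[OF cc_weight_summable[OF p], where N = 0])
      fix k show "norm (s k * cc k) \<le> cc k / xo k ^ p"
        using cc_nonneg[of k] xo_pos[of k] by (simp add: s_def abs_mult abs_divide power_abs)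
    qed
    have "suminf (\<lambda>k. s k * (cc k / 16)) = suminf (\<lambda>k. s k * cc k / 16)" by simp
    also have "\<dots> = suminf (\<lambda>k. s k * cc k) / 16" by (rule suminf_divide[OF sm])
    finally show ?thesis by (simp add: s_def)
  qed
  from T have "(\<lambda>N. Q p N) \<longlonglongrightarrow> suminf (\<lambda>k. s k * (cc k / 16))" unfolding e1 .
  thus ?thesis unfolding e2 .
qed


lemma pair_ident:
  fixes x y :: real
  assumes p: "odd p" and x: "x > 0" and y: "y > 0"
  shows "1 / (x ^ p * (x + y)) + 1 / (y ^ p * (x + y)) = (\<Sum>r<p. (-1) ^ r / (x ^ (p - r) * y ^ (r + 1)))"
proof -
  define v where "v r = (-1) ^ r / (x ^ (p - r) * y ^ r * (x + y))" for r
  have t: "(-1) ^ r / (x ^ (p - r) * y ^ (r + 1)) = v r - v (Suc r)" if r: "r < p" for r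
  proof -
    define A where "A = x ^ (p - Suc r)"
    define B where "B = y ^ r"
    define z where "z = x + y"
    have nz: "A \<noteq> 0" "B \<noteq> 0" "z \<noteq> 0" "x \<noteq> 0" "y \<noteq> 0" using x y by (simp_all add: A_def B_def z_def)
    have e: "x ^ (p - r) = x * A" "y ^ (r + 1) = y * B" "x ^ (p - Suc r) = A" "y ^ Suc r = y * B" "y ^ r = B"
      using r by (simp_all add: A_def B_def Suc_diff_Suc[symmetric])
    show ?thesis unfolding v_def e z_def[symmetric] using nz
      by (simp add: field_simps) (simp add: z_def algebra_simps)
  qed
  have "(\<Sum>r<p. (-1) ^ r / (x ^ (p - r) * y ^ (r + 1))) = (\<Sum>r<p. v r - v (Suc r))"
  proof (intro sum.cong refl)
    fix r assume "r \<in> {..<p}"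
    hence "r < p" by simp
    thus "(-1) ^ r / (x ^ (p - r) * y ^ (r + 1)) = v r - v (Suc r)" by (rule t)
  qed
  also have "\<dots> = v 0 - v p" by (rule sum_lessThan_telescope')
  also have "\<dots> = 1 / (x ^ p * (x + y)) + 1 / (y ^ p * (x + y))"
    using p by (simp add: v_def)
  finally show ?thesis ..
qed

definition bN :: "nat \<Rightarrow> nat \<Rightarrow> real" where "bN r N = (\<Sum>k<N. (-1) ^ k / xo k ^ r)"

lemma Q_ident: assumes p: "odd p"
  shows "2 * Q p N = (\<Sum>r<p. (-1) ^ r * (bN (p - r) N * bN (r + 1) N))"
proof -
  have Q1: "Q p N = (\<Sum>k<N. \<Sum>i<N. (-1) ^ k * (-1) ^ i * (1 / (xo k ^ p * (xo k + xo i))))"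
    unfolding Q_def sum_distrib_left by (intro sum.cong refl) (simp add: field_simps)
  have Q2: "Q p N = (\<Sum>k<N. \<Sum>i<N. (-1) ^ k * (-1) ^ i * (1 / (xo i ^ p * (xo k + xo i))))"
    unfolding Q1 by (subst sum.swap) (simp add: add.commute mult.commute)
  have "2 * Q p N = (\<Sum>k<N. \<Sum>i<N. (-1) ^ k * (-1) ^ i * (1 / (xo k ^ p * (xo k + xo i)) + 1 / (xo i ^ p * (xo k + xo i))))"
    unfolding mult_2 by (subst (1) Q1, subst Q2) (simp add: sum.distrib[symmetric] algebra_simps)
  also have "\<dots> = (\<Sum>k<N. \<Sum>i<N. \<Sum>r<p. (-1) ^ r * (((-1) ^ k / xo k ^ (p - r)) * ((-1) ^ i / xo i ^ (r + 1))))"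
  proof (intro sum.cong refl)
    fix k i
    show "(-1) ^ k * (-1) ^ i * (1 / (xo k ^ p * (xo k + xo i)) + 1 / (xo i ^ p * (xo k + xo i)))
      = (\<Sum>r<p. (-1) ^ r * (((-1) ^ k / xo k ^ (p - r)) * ((-1) ^ i / xo i ^ (r + 1))))"
      unfolding pair_ident[OF p xo_pos xo_pos] sum_distrib_left by (intro sum.cong refl) (simp add: field_simps)
  qed
  also have "\<dots> = (\<Sum>k<N. \<Sum>r<p. \<Sum>i<N. (-1) ^ r * (((-1) ^ k / xo k ^ (p - r)) * ((-1) ^ i / xo i ^ (r + 1))))"
    by (rule sum.cong[OF refl]) (rule sum.swap)
  also have "\<dots> = (\<Sum>r<p. \<Sum>k<N. \<Sum>i<N. (-1) ^ r * (((-1) ^ k / xo k ^ (p - r)) * ((-1) ^ i / xo i ^ (r + 1))))"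
    by (rule sum.swap)
  also have "\<dots> = (\<Sum>r<p. (-1) ^ r * (bN (p - r) N * bN (r + 1) N))"
    unfolding bN_def sum_product by (simp only: sum_distrib_left)
  finally show ?thesis .
qed

lemma bN_lim: "r \<ge> 1 \<Longrightarrow> (\<lambda>N. bN r N) \<longlonglongrightarrow> dirichlet_beta r"
  using beta_sums[of r] unfolding sums_def bN_def xo_def .

lemma L_beta: assumes p: "odd p"
  shows "(\<Sum>k. (-1) ^ k / xo k ^ p * cc k) = 8 * (\<Sum>r<p. (-1) ^ r * (dirichlet_beta (p - r) * dirichlet_beta (r + 1)))"
proof -
  have p1: "p \<ge> 1" using p by (cases p) auto
  have a: "(\<lambda>N. 2 * Q p N) \<longlonglongrightarrow> 2 * ((\<Sum>k. (-1) ^ k / xo k ^ p * cc k) / 16)"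
    by (intro tendsto_intros Q_lim p1)
  have b: "(\<lambda>N. 2 * Q p N) \<longlonglongrightarrow> (\<Sum>r<p. (-1) ^ r * (dirichlet_beta (p - r) * dirichlet_beta (r + 1)))"
    unfolding Q_ident[OF p] by (intro tendsto_intros bN_lim) auto
  from LIMSEQ_unique[OF a b] show ?thesis by simp
qed


lemma series_j:
  assumes F: "\<And>n. F n = Sg n j / Sg n 0"
  shows "(\<lambda>n. cbw (n + 1) * F n) sums (\<Sum>k. (-1) ^ k / xo k ^ (2 * j + 1) * cc k)"
proof -
  have "(\<lambda>n. cbw (n + 1) * F n) = (\<lambda>n. \<Sum>k\<le>n. vv k (n - k) * ((-1) ^ k / xo k ^ (2 * j + 1)))"
    using cbw_expand[of _ j] by (simp add: F)
  thus ?thesis using main_sums[of "2 * j + 1"] by simp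
qed

lemma Sg0_nz: "Sg n 0 \<noteq> 0"
  unfolding Sg0_closed using cb_pos[of "Suc n"] by simp

theorem mainTheorem2:
  shows "((\<lambda>n. cbw (n + 1)) sums (8 * dirichlet_beta 1 ^ 2)
      \<and> 8 * dirichlet_beta 1 ^ 2 = pi ^ 2 / 2)
    \<and> ((\<lambda>n. cbw (n + 1) * odd_harm 2 (n + 1))
           sums (16 * dirichlet_beta 1 * dirichlet_beta 3 - 8 * dirichlet_beta 2 ^ 2)
      \<and> 16 * dirichlet_beta 1 * dirichlet_beta 3 - 8 * dirichlet_beta 2 ^ 2
          = pi ^ 4 / 8 - 8 * dirichlet_beta 2 ^ 2)
    \<and> ((\<lambda>n. cbw (n + 1) * ((odd_harm 2 (n + 1) ^ 2 + odd_harm 4 (n + 1)) / 2))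
           sums (16 * dirichlet_beta 1 * dirichlet_beta 5 - 16 * dirichlet_beta 2 * dirichlet_beta 4
                 + 8 * dirichlet_beta 3 ^ 2)
      \<and> 16 * dirichlet_beta 1 * dirichlet_beta 5 - 16 * dirichlet_beta 2 * dirichlet_beta 4
                 + 8 * dirichlet_beta 3 ^ 2
          = pi ^ 6 / 48 - 16 * dirichlet_beta 2 * dirichlet_beta 4)
    \<and> ((\<lambda>n. cbw (n + 1) * ((odd_harm 2 (n + 1) ^ 3 + 3 * odd_harm 2 (n + 1) * odd_harm 4 (n + 1)
                              + 2 * odd_harm 6 (n + 1)) / 6))
           sums (16 * dirichlet_beta 1 * dirichlet_beta 7 - 16 * dirichlet_beta 2 * dirichlet_beta 6
                 + 16 * dirichlet_beta 3 * dirichlet_beta 5 - 8 * dirichlet_beta 4 ^ 2)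
      \<and> 16 * dirichlet_beta 1 * dirichlet_beta 7 - 16 * dirichlet_beta 2 * dirichlet_beta 6
                 + 16 * dirichlet_beta 3 * dirichlet_beta 5 - 8 * dirichlet_beta 4 ^ 2
          = 17 * pi ^ 8 / 5760 - 16 * dirichlet_beta 2 * dirichlet_beta 6 - 8 * dirichlet_beta 4 ^ 2)"
proof -
  have odd_3: "odd (3::nat)" and odd_5: "odd (5::nat)" and odd_7: "odd (7::nat)" by simp_all
  have L1: "(\<Sum>k. (-1) ^ k / xo k ^ (2 * 0 + 1) * cc k) = 8 * dirichlet_beta 1 ^ 2"
    using L_beta[of 1] by (simp add: power2_eq_square)
  have L3: "(\<Sum>k. (-1) ^ k / xo k ^ (2 * 1 + 1) * cc k) = 16 * dirichlet_beta 1 * dirichlet_beta 3 - 8 * dirichlet_beta 2 ^ 2"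
    using L_beta[OF odd_3] by (simp add: eval_nat_numeral power2_eq_square algebra_simps)
  have L5: "(\<Sum>k. (-1) ^ k / xo k ^ (2 * 2 + 1) * cc k) = 16 * dirichlet_beta 1 * dirichlet_beta 5 - 16 * dirichlet_beta 2 * dirichlet_beta 4
                 + 8 * dirichlet_beta 3 ^ 2"
    using L_beta[OF odd_5] by (simp add: eval_nat_numeral power2_eq_square algebra_simps)
  have L7: "(\<Sum>k. (-1) ^ k / xo k ^ (2 * 3 + 1) * cc k) = 16 * dirichlet_beta 1 * dirichlet_beta 7 - 16 * dirichlet_beta 2 * dirichlet_beta 6
                 + 16 * dirichlet_beta 3 * dirichlet_beta 5 - 8 * dirichlet_beta 4 ^ 2"
    using L_beta[OF odd_7] by (simp add: eval_nat_numeral power2_eq_square algebra_simps)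
  have s0: "(\<lambda>n. cbw (n + 1) * 1) sums (8 * dirichlet_beta 1 ^ 2)"
    using series_j[of "\<lambda>_. 1" 0] Sg0_nz unfolding L1 by simp
  have s1: "(\<lambda>n. cbw (n + 1) * odd_harm 2 (n + 1)) sums (16 * dirichlet_beta 1 * dirichlet_beta 3 - 8 * dirichlet_beta 2 ^ 2)"
    using series_j[of "\<lambda>n. odd_harm 2 (n + 1)" 1] Sg0_nz Sg1 unfolding L3 by (simp add: h1_def)
  have s2: "(\<lambda>n. cbw (n + 1) * ((odd_harm 2 (n + 1) ^ 2 + odd_harm 4 (n + 1)) / 2))
           sums (16 * dirichlet_beta 1 * dirichlet_beta 5 - 16 * dirichlet_beta 2 * dirichlet_beta 4
                 + 8 * dirichlet_beta 3 ^ 2)"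
    using series_j[of "\<lambda>n. (odd_harm 2 (n + 1) ^ 2 + odd_harm 4 (n + 1)) / 2" 2] Sg0_nz Sg2
    unfolding L5 by (simp add: h2_def)
  have s3: "(\<lambda>n. cbw (n + 1) * ((odd_harm 2 (n + 1) ^ 3 + 3 * odd_harm 2 (n + 1) * odd_harm 4 (n + 1)
                              + 2 * odd_harm 6 (n + 1)) / 6))
           sums (16 * dirichlet_beta 1 * dirichlet_beta 7 - 16 * dirichlet_beta 2 * dirichlet_beta 6
                 + 16 * dirichlet_beta 3 * dirichlet_beta 5 - 8 * dirichlet_beta 4 ^ 2)"
    using series_j[of "\<lambda>n. (odd_harm 2 (n + 1) ^ 3 + 3 * odd_harm 2 (n + 1) * odd_harm 4 (n + 1)
                              + 2 * odd_harm 6 (n + 1)) / 6" 3] Sg0_nz Sg3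
    unfolding L7 by (simp add: h3_def)
  have c0: "8 * dirichlet_beta 1 ^ 2 = pi ^ 2 / 2" unfolding beta1 by (simp add: power2_eq_square)
  have c1: "16 * dirichlet_beta 1 * dirichlet_beta 3 - 8 * dirichlet_beta 2 ^ 2 = pi ^ 4 / 8 - 8 * dirichlet_beta 2 ^ 2"
    unfolding beta1 beta3 by (simp add: field_simps eval_nat_numeral)
  have c2: "16 * dirichlet_beta 1 * dirichlet_beta 5 - 16 * dirichlet_beta 2 * dirichlet_beta 4
                 + 8 * dirichlet_beta 3 ^ 2 = pi ^ 6 / 48 - 16 * dirichlet_beta 2 * dirichlet_beta 4"
    unfolding beta1 beta3 beta5 by (simp add: field_simps eval_nat_numeral)
  have c3: "16 * dirichlet_beta 1 * dirichlet_beta 7 - 16 * dirichlet_beta 2 * dirichlet_beta 6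
                 + 16 * dirichlet_beta 3 * dirichlet_beta 5 - 8 * dirichlet_beta 4 ^ 2
          = 17 * pi ^ 8 / 5760 - 16 * dirichlet_beta 2 * dirichlet_beta 6 - 8 * dirichlet_beta 4 ^ 2"
    unfolding beta1 beta3 beta5 beta7 by (simp add: field_simps eval_nat_numeral)
  show ?thesis using s0 s1 s2 s3 c0 c1 c2 c3 by simp
qed

end
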